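(* Let $N\ge1$, and for a parameter vector $h=(h_\alpha,h_\beta,h_1,\dots,h_{N-1})\in\mathbb{R}^{N+1}$ consider the linear system $\dot{\mathbf x}=A(h)\mathbf x+B\delta(t)$, $y=C\mathbf x$, with $A(h)$ as in the context, $B=e_1$ and $C=e_2^T$, whose input–output behaviour is the transfer function $G_h(s)=C(sI-A(h))^{-1}B$ (equivalently the impulse response $y_h(t)=Ce^{A(h)t}B$, $t\ge0$). Then there is a Lebesgue-null set $\mathcal{Z}\subset\mathbb{R}^{N+1}$ such that for all $h,h'\notin\mathcal Z$ with known (designed) sensor couplings $h_\alpha=h'_\alpha$, $h_\beta=h'_\beta$, the equality $G_h(s)=G_{h'}(s)$ (for all $s$) implies $|h_i|=|h'_i|$ for all $i=1,\dots,N-1$. That is, the magnitudes of the chain couplings $h_1,\dots,h_{N-1}$ are uniquely determined by the measurement record of $Z_\alpha Y_\beta$ with initial state $\rho^x_\alpha\otimes\frac I2$.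
   Context: For an integer $N\ge1$ and real parameters $h=(h_\alpha,h_\beta,h_1,\dots,h_{N-1})$, set $(c_1,c_2,c_3,\dots,c_{N+1})=(h_\alpha,h_\beta,h_1,\dots,h_{N-1})$ and let $A(h)$ be the real $(N+2)\times(N+2)$ tridiagonal matrix with $A_{j,j+1}=c_j$, $A_{j+1,j}=-c_j$ for $j=1,\dots,N+1$ and all other entries zero. $e_j$ denotes the $j$-th standard basis column vector. Physically, this is the Heisenberg-picture dynamics $\frac{d}{dt}\langle O\rangle=\langle \mathrm{i}[H,O]\rangle$ of the expectation vector $\mathbf x=(\langle X_\alpha\rangle,\langle Z_\alpha Y_\beta\rangle,\langle Z_\alpha Z_\beta X_1\rangle,\langle Z_\alpha Z_\beta Z_1Y_2\rangle,\dots)$ for the chain of qubits $\alpha,\beta,1,\dots,N$ with Hamiltonian $H=\frac{h_\alpha}{2}(X_\alpha X_\beta+Y_\alpha Y_\beta)+\frac{h_\beta}{2}(X_\beta X_1+Y_\beta Y_1)+\sum_{k=1}^{N-1}\frac{h_k}{2}(X_kX_{k+1}+Y_kY_{k+1})$, where $X,Y,Z$ are Pauli matrices and $\rho^x_\alpha=(I+X)/2$ on qubit $\alpha$. *)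

theory Defs
  imports "HOL-Analysis.Analysis" "Jordan_Normal_Form.Gauss_Jordan_Elimination"
begin

text \<open>Parameters h :: nat => real, with h 0 = h_alpha, h 1 = h_beta, h (k+1) = h_k for k = 1..N-1.
  Matrices are 0-indexed: row/column i corresponds to the paper's index i+1.\<close>

definition coupling_mat :: "nat \<Rightarrow> (nat \<Rightarrow> real) \<Rightarrow> complex mat" where
  "coupling_mat N h = mat (N+2) (N+2)
     (\<lambda>(i,j). if j = i + 1 then complex_of_real (h i)
              else if i = j + 1 then - complex_of_real (h j) else 0)"

definition resolvent_arg :: "nat \<Rightarrow> (nat \<Rightarrow> real) \<Rightarrow> complex \<Rightarrow> complex mat" where
  "resolvent_arg N h s = s \<cdot>\<^sub>m 1\<^sub>m (N+2) - coupling_mat N h"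

text \<open>Transfer function G_h(s) = C (sI - A(h))^{-1} B with B = e_1, C = e_2^T,
  defined at points s where sI - A(h) is invertible (value 0 elsewhere, never used).\<close>
definition transfer_fn :: "nat \<Rightarrow> (nat \<Rightarrow> real) \<Rightarrow> complex \<Rightarrow> complex" where
  "transfer_fn N h s =
     (case mat_inverse (resolvent_arg N h s) of
        Some Mi \<Rightarrow> (Mi *\<^sub>v unit_vec (N+2) 0) $ 1
      | None \<Rightarrow> 0)"

end

theory Submission
  imports Defs "HOL-Computational_Algebra.Polynomial" "Jordan_Normal_Form.Determinant"
begin

function Dp :: "nat \<Rightarrow> (nat \<Rightarrow> real) \<Rightarrow> nat \<Rightarrow> real poly" where
  "Dp N h k = (if N + 2 < k then 0 else if k = N + 2 then 1
      else [:0,1:] * Dp N h (k+1) + Polynomial.smult ((h k)^2) (Dp N h (k+2)))"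
  by pat_completeness auto
termination by (relation "Wellfounded.measure (\<lambda>(N,h,k). N + 3 - k)") auto

declare Dp.simps[simp del]

lemma Dp_big: "N + 2 < k \<Longrightarrow> Dp N h k = 0"
  by (subst Dp.simps) simp
lemma Dp_top: "Dp N h (N+2) = 1"
  by (subst Dp.simps) simp
lemma Dp_rec: "k < N + 2 \<Longrightarrow> Dp N h k = [:0,1:] * Dp N h (k+1) + Polynomial.smult ((h k)^2) (Dp N h (k+2))"
  by (subst Dp.simps) simp

lemma Dp_deg_lead: "k \<le> N + 2 \<Longrightarrow> degree (Dp N h k) = N + 2 - k \<and> lead_coeff (Dp N h k) = 1"
proof (induction "N + 2 - k" arbitrary: k rule: less_induct)
  case less
  show ?case
  proof (cases "k = N + 2")
    case True then show ?thesis using Dp_top[of N h] by simp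
  next
    case False
    then have k: "k < N + 2" using less by simp
    have IH1: "degree (Dp N h (k+1)) = N + 1 - k \<and> lead_coeff (Dp N h (k+1)) = 1"
    proof -
      have "N + 2 - (k+1) < N + 2 - k" "k+1 \<le> N+2" using k by auto
      from less(1)[OF this] show ?thesis by (elim conjE) simp
    qed
    have d1: "degree ([:0,1:] * Dp N h (k+1)) = N + 2 - k"
      using IH1 k by (subst degree_mult_eq) auto
    have l1: "lead_coeff ([:0,1:] * Dp N h (k+1)) = 1"
      using IH1 by (elim conjE) (simp only: lead_coeff_mult, simp)
    have d2: "degree (Polynomial.smult ((h k)^2) (Dp N h (k+2))) < N + 2 - k"
    proof (cases "k + 2 \<le> N + 2")
      case True
      have "N + 2 - (k+2) < N + 2 - k" using k by auto
      from less(1)[OF this True] have "degree (Dp N h (k+2)) = N - k" by simp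
      then show ?thesis using k degree_smult_le[of "(h k)^2" "Dp N h (k+2)"] by linarith
    next
      case False
      then show ?thesis using k by (simp add: Dp_big)
    qed
    let ?P = "[:0,1:] * Dp N h (k+1)" and ?Q = "Polynomial.smult ((h k)^2) (Dp N h (k+2))"
    have lt: "degree ?Q < degree ?P" using d1 d2 by simp
    have e1: "degree (?P + ?Q) = degree ?P" using lt by (rule degree_add_eq_left)
    have e2: "lead_coeff (?P + ?Q) = lead_coeff ?P"
      using lead_coeff_add_le[OF lt] by (simp add: add.commute)
    show ?thesis using Dp_rec[OF k, of h] e1 e2 d1 l1 by simp
  qed
qed

lemma Dp_lead: "k \<le> N + 2 \<Longrightarrow> lead_coeff (Dp N h k) = 1"
  using Dp_deg_lead by blast

lemma step_lemma:
  assumes k: "k \<le> N"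
    and I: "Dp N h k * Dp N h' (k+1) = Dp N h' k * Dp N h (k+1)"
  shows "(h k)^2 = (h' k)^2 \<and> (h k \<noteq> 0 \<longrightarrow> Dp N h (k+1) * Dp N h' (k+2) = Dp N h' (k+1) * Dp N h (k+2))"
proof -
  let ?a = "(h k)^2" and ?b = "(h' k)^2"
  have r1: "Dp N h k = [:0,1:] * Dp N h (k+1) + Polynomial.smult ?a (Dp N h (k+2))" using k by (intro Dp_rec) simp
  have r2: "Dp N h' k = [:0,1:] * Dp N h' (k+1) + Polynomial.smult ?b (Dp N h' (k+2))" using k by (intro Dp_rec) simp
  let ?X = "[:0,1:] :: real poly"
  have e1: "Dp N h k * Dp N h' (k+1) = ?X * (Dp N h (k+1) * Dp N h' (k+1)) + Polynomial.smult ?a (Dp N h (k+2) * Dp N h' (k+1))"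
    unfolding r1 by (simp only: distrib_right mult.assoc mult_smult_left)
  have e2: "Dp N h' k * Dp N h (k+1) = ?X * (Dp N h (k+1) * Dp N h' (k+1)) + Polynomial.smult ?b (Dp N h' (k+2) * Dp N h (k+1))"
    unfolding r2 by (simp only: distrib_right mult.assoc mult_smult_left mult.commute[of "Dp N h' (k+1)" "Dp N h (k+1)"])
  have E: "Polynomial.smult ?a (Dp N h (k+2) * Dp N h' (k+1)) = Polynomial.smult ?b (Dp N h' (k+2) * Dp N h (k+1))"
    using I unfolding e1 e2 by (rule add_left_imp_eq)
  have m1: "lead_coeff (Dp N h (k+2) * Dp N h' (k+1)) = 1"
    using k by (simp add: lead_coeff_mult Dp_lead)
  have m2: "lead_coeff (Dp N h' (k+2) * Dp N h (k+1)) = 1"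
    using k by (simp add: lead_coeff_mult Dp_lead)
  have ab: "?a = ?b" using arg_cong[OF E, of lead_coeff] m1 m2 by (simp only: lead_coeff_smult)
  moreover have "h k \<noteq> 0 \<longrightarrow> Dp N h (k+1) * Dp N h' (k+2) = Dp N h' (k+1) * Dp N h (k+2)"
  proof
    assume "h k \<noteq> 0"
    then have "?a \<noteq> 0" by simp
    then have "?b \<noteq> 0" using ab by simp
    moreover have "Polynomial.smult ?b (Dp N h (k+1) * Dp N h' (k+2)) = Polynomial.smult ?b (Dp N h' (k+1) * Dp N h (k+2))"
      using E ab by (metis mult.commute)
    ultimately show "Dp N h (k+1) * Dp N h' (k+2) = Dp N h' (k+1) * Dp N h (k+2)"
      by (rule smult_cancel)
  qed
  ultimately show ?thesis by blast
qed


definition aa :: "(nat \<Rightarrow> real) \<Rightarrow> nat \<Rightarrow> nat \<Rightarrow> real" where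
  "aa h i j = (if j = i + 1 then h i else if i = j + 1 then - h j else 0)"

lemma aa_antisym: "aa h j i = - aa h i j"
  unfolding aa_def by auto

lemma res_carrier: "resolvent_arg N h s \<in> carrier_mat (N+2) (N+2)"
  unfolding resolvent_arg_def coupling_mat_def by auto

lemma res_idx: "i < N+2 \<Longrightarrow> j < N+2 \<Longrightarrow>
  resolvent_arg N h s $$ (i,j) = (if i = j then s else 0) - complex_of_real (aa h i j)"
  unfolding resolvent_arg_def coupling_mat_def aa_def by auto

lemma res_mult: assumes v: "v \<in> carrier_vec (N+2)" and i: "i < N+2"
  shows "(resolvent_arg N h s *\<^sub>v v) $ i = s * v $ i - (\<Sum>j<N+2. complex_of_real (aa h i j) * v $ j)"
proof -
  have "(resolvent_arg N h s *\<^sub>v v) $ i = (\<Sum>j<N+2. ((if i = j then s else 0) - complex_of_real (aa h i j)) * v $ j)"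
    using v i res_carrier[of N h s]
    by (simp add: scalar_prod_def res_idx atLeast0LessThan)
  also have "\<dots> = (\<Sum>j<N+2. (if i = j then s * v $ j else 0)) - (\<Sum>j<N+2. complex_of_real (aa h i j) * v $ j)"
    unfolding sum_subtractf[symmetric] by (intro sum.cong) (auto simp: left_diff_distrib)
  also have "\<dots> = s * v $ i - (\<Sum>j<N+2. complex_of_real (aa h i j) * v $ j)"
    by (subst sum.delta') (use i in auto)
  finally show ?thesis .
qed


lemma antisym_re:
  fixes a :: "nat \<Rightarrow> nat \<Rightarrow> real" and v :: "nat \<Rightarrow> complex"
  assumes "\<And>i j. a j i = - a i j"
  shows "Re (\<Sum>i<n. \<Sum>j<n. cnj (v i) * complex_of_real (a i j) * v j) = 0"
proof -
  let ?S = "\<Sum>i<n. \<Sum>j<n. cnj (v i) * complex_of_real (a i j) * v j"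
  have "cnj ?S = (\<Sum>i<n. \<Sum>j<n. v i * complex_of_real (a i j) * cnj (v j))"
    by (simp add: cnj_sum)
  also have "\<dots> = (\<Sum>j<n. \<Sum>i<n. v i * complex_of_real (a i j) * cnj (v j))"
    by (rule sum.swap)
  also have "\<dots> = (\<Sum>j<n. \<Sum>i<n. - (cnj (v j) * complex_of_real (a j i) * v i))"
  proof (intro sum.cong refl)
    fix i j
    have "a i j = - a j i" using assms[of j i] by simp
    then show "v i * complex_of_real (a i j) * cnj (v j) = - (cnj (v j) * complex_of_real (a j i) * v i)"
      by (simp add: algebra_simps)
  qed
  also have "\<dots> = - ?S" by (simp add: sum_negf)
  finally have "cnj ?S = - ?S" .
  then have "Re (cnj ?S) = Re (- ?S)" by simp
  then show ?thesis by simp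
qed

lemma kernel_trivial:
  assumes r: "r > 0" and v: "v \<in> carrier_vec (N+2)"
    and Mv: "resolvent_arg N h (complex_of_real r) *\<^sub>v v = 0\<^sub>v (N+2)"
  shows "v = 0\<^sub>v (N+2)"
proof -
  let ?n = "N+2"
  have row: "complex_of_real r * v $ i = (\<Sum>j<?n. complex_of_real (aa h i j) * v $ j)" if "i < ?n" for i
  proof -
    have "(resolvent_arg N h (complex_of_real r) *\<^sub>v v) $ i = 0" using Mv that by simp
    then show ?thesis using res_mult[OF v that] by simp
  qed
  have "(\<Sum>i<?n. cnj (v $ i) * (complex_of_real r * v $ i))
      = (\<Sum>i<?n. cnj (v $ i) * (\<Sum>j<?n. complex_of_real (aa h i j) * v $ j))"
    using row by (intro sum.cong) auto
  also have "\<dots> = (\<Sum>i<?n. \<Sum>j<?n. cnj (v $ i) * complex_of_real (aa h i j) * v $ j)"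
    by (simp only: sum_distrib_left mult.assoc)
  finally have E: "(\<Sum>i<?n. cnj (v $ i) * (complex_of_real r * v $ i)) = \<dots>" .
  have "Re (\<Sum>i<?n. cnj (v $ i) * (complex_of_real r * v $ i)) = 0"
    unfolding E by (rule antisym_re[OF aa_antisym])
  moreover have "Re (\<Sum>i<?n. cnj (v $ i) * (complex_of_real r * v $ i)) = r * (\<Sum>i<?n. (cmod (v $ i))^2)"
  proof -
    have pt: "\<And>i. Re (cnj (v $ i) * (complex_of_real r * v $ i)) = r * (cmod (v $ i))^2"
      unfolding cmod_power2 by (simp add: power2_eq_square algebra_simps)
    show ?thesis by (simp only: Re_sum sum_distrib_left pt)
  qed
  ultimately have "(\<Sum>i<?n. (cmod (v $ i))^2) = 0" using r by simp
  then have "\<forall>i\<in>{..<?n}. (cmod (v $ i))^2 = 0"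
    by (subst sum_nonneg_eq_0_iff[symmetric]) auto
  then show ?thesis using v by (intro eq_vecI) auto
qed

lemma res_inv:
  assumes r: "r > 0"
  shows "invertible_mat (resolvent_arg N h (complex_of_real r)) \<and>
    (\<exists>B. mat_inverse (resolvent_arg N h (complex_of_real r)) = Some B \<and>
         B * resolvent_arg N h (complex_of_real r) = 1\<^sub>m (N+2) \<and> B \<in> carrier_mat (N+2) (N+2))"
proof -
  let ?M = "resolvent_arg N h (complex_of_real r)"
  have C: "?M \<in> carrier_mat (N+2) (N+2)" by (rule res_carrier)
  have "Determinant.det ?M \<noteq> 0"
    unfolding det_0_iff_vec_prod_zero[OF C] using kernel_trivial[OF r] by blast
  then have U: "?M \<in> Units (ring_mat TYPE(complex) (N+2) ())"
    by (rule det_non_zero_imp_unit[OF C])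
  obtain B where B: "mat_inverse ?M = Some B"
    using mat_inverse(1)[OF C, of "()"] U by (cases "mat_inverse ?M") auto
  from mat_inverse(2)[OF C B] have MB: "?M * B = 1\<^sub>m (N+2)" "B * ?M = 1\<^sub>m (N+2)" "B \<in> carrier_mat (N+2) (N+2)"
    by auto
  have "invertible_mat ?M"
    unfolding invertible_mat_def inverts_mat_def square_mat.simps using C MB by auto
  then show ?thesis using B MB by blast
qed


definition yr :: "nat \<Rightarrow> (nat \<Rightarrow> real) \<Rightarrow> real \<Rightarrow> nat \<Rightarrow> real" where
  "yr N h r k = (-1)^k * (\<Prod>j<k. h j) * poly (Dp N h (k+1)) r"

lemma yr_end: "yr N h r (N+2) = 0"
  unfolding yr_def by (simp add: Dp_big)

lemma aa_sum: assumes i: "i < N+2"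
  shows "(\<Sum>j<N+2. aa h i j * yr N h r j) = h i * yr N h r (i+1) - (if i > 0 then h (i-1) * yr N h r (i-1) else 0)"
proof -
  have pt: "aa h i j * yr N h r j = (if j = i+1 then h i * yr N h r (i+1) else 0)
      + (if j = i - 1 \<and> i > 0 then - (h (i-1) * yr N h r (i-1)) else 0)" for j
    unfolding aa_def by auto
  have s1: "(\<Sum>j<N+2. (if j = i+1 then h i * yr N h r (i+1) else 0)) = h i * yr N h r (i+1)"
  proof (cases "i + 1 < N + 2")
    case True then show ?thesis by simp
  next
    case False then have "i + 1 = N+2" using i by simp
    then show ?thesis using yr_end[of N h r] by simp
  qed
  have s2: "(\<Sum>j<N+2. (if j = i - 1 \<and> i > 0 then - (h (i-1) * yr N h r (i-1)) else 0))
      = (if i > 0 then - (h (i-1) * yr N h r (i-1)) else 0)"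
  proof (cases "i > 0")
    case True
    have "(\<Sum>j<N+2. (if j = i - 1 \<and> i > 0 then - (h (i-1) * yr N h r (i-1)) else 0))
        = (\<Sum>j<N+2. (if j = i - 1 then - (h (i-1) * yr N h r (i-1)) else 0))"
      using True by simp
    also have "\<dots> = - (h (i-1) * yr N h r (i-1))"
      by (subst sum.delta) (use i in auto)
    finally show ?thesis using True by simp
  qed simp
  show ?thesis unfolding pt sum.distrib s1 s2 by simp
qed

lemma yrow: assumes i: "i < N+2"
  shows "r * yr N h r i - (\<Sum>j<N+2. aa h i j * yr N h r j) = (if i = 0 then poly (Dp N h 0) r else 0)"
proof (cases i)
  case 0
  have "poly (Dp N h 0) r = r * poly (Dp N h 1) r + (h 0)^2 * poly (Dp N h 2) r"
    using Dp_rec[of 0 N h] by (simp add: numeral_2_eq_2)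
  then show ?thesis using 0 unfolding aa_sum[OF i] by (simp add: yr_def power2_eq_square numeral_2_eq_2)
next
  case (Suc m)
  have D: "poly (Dp N h (Suc m)) r = r * poly (Dp N h (m+2)) r + (h (Suc m))^2 * poly (Dp N h (m+3)) r"
    using Dp_rec[of "Suc m" N h] i Suc by (simp add: eval_nat_numeral)
  have P1: "(\<Prod>j<Suc m. h j) = (\<Prod>j<m. h j) * h m" by simp
  have P2: "(\<Prod>j<Suc (Suc m). h j) = (\<Prod>j<m. h j) * h m * h (Suc m)" by simp
  show ?thesis using Suc unfolding aa_sum[OF i]
    by (simp add: yr_def P1 P2 D eval_nat_numeral algebra_simps power2_eq_square)
qed

lemma transfer_eq:
  assumes r: "r > 0"
  shows "complex_of_real (poly (Dp N h 0) r) * transfer_fn N h (complex_of_real r)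
       = complex_of_real (- h 0 * poly (Dp N h 2) r)"
proof -
  let ?n = "N+2"
  let ?M = "resolvent_arg N h (complex_of_real r)"
  have C: "?M \<in> carrier_mat ?n ?n" by (rule res_carrier)
  obtain B where B: "mat_inverse ?M = Some B" "B * ?M = 1\<^sub>m ?n" "B \<in> carrier_mat ?n ?n"
    using res_inv[OF r, of N h] by blast
  define y where "y = vec ?n (\<lambda>k. complex_of_real (yr N h r k))"
  define c where "c = complex_of_real (poly (Dp N h 0) r)"
  have yc: "y \<in> carrier_vec ?n" unfolding y_def by simp
  have My: "?M *\<^sub>v y = c \<cdot>\<^sub>v unit_vec ?n 0"
  proof (rule eq_vecI)
    fix i assume "i < dim_vec (c \<cdot>\<^sub>v unit_vec ?n 0)"
    then have i: "i < ?n" by simp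
    have "(?M *\<^sub>v y) $ i = complex_of_real (r * yr N h r i - (\<Sum>j<?n. aa h i j * yr N h r j))"
      unfolding res_mult[OF yc i] using i by (simp add: y_def)
    also have "\<dots> = (c \<cdot>\<^sub>v unit_vec ?n 0) $ i"
      unfolding yrow[OF i] using i by (simp add: c_def)
    finally show "(?M *\<^sub>v y) $ i = (c \<cdot>\<^sub>v unit_vec ?n 0) $ i" .
  qed (use C in simp)
  have "y = (B * ?M) *\<^sub>v y" using B yc by simp
  also have "\<dots> = B *\<^sub>v (?M *\<^sub>v y)" using B(3) C yc by simp
  also have "\<dots> = c \<cdot>\<^sub>v (B *\<^sub>v unit_vec ?n 0)" unfolding My
    by (rule mult_mat_vec[OF B(3)]) simp
  finally have "y $ 1 = c * (B *\<^sub>v unit_vec ?n 0) $ 1" using B(3) by simp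
  moreover have "transfer_fn N h (complex_of_real r) = (B *\<^sub>v unit_vec ?n 0) $ 1"
    unfolding transfer_fn_def using B(1) by simp
  moreover have "y $ 1 = complex_of_real (- h 0 * poly (Dp N h 2) r)"
    unfolding y_def by (simp add: yr_def numeral_2_eq_2)
  ultimately show ?thesis unfolding c_def by simp
qed



lemma poly_zero_pos: fixes p :: "real poly"
  assumes "\<And>r. r > 0 \<Longrightarrow> poly p r = 0" shows "p = 0"
proof (rule ccontr)
  assume "p \<noteq> 0"
  then have "finite {x. poly p x = 0}" by (rule poly_roots_finite)
  moreover have "{0<..<1::real} \<subseteq> {x. poly p x = 0}" using assms by auto
  ultimately have "finite {0<..<1::real}" by (rule finite_subset[rotated])
  then show False using infinite_Ioo[of 0 "1::real"] by simp
qed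

lemma E_sets: "(\<Pi>\<^sub>E i\<in>{..(N::nat)}. if i = j then {0} else (UNIV::real set)) \<in> sets (Pi\<^sub>M {..N} (\<lambda>_. lborel))"
  using sets_PiM_I_finite[of "{..N}" "\<lambda>i. if i = j then {0} else (UNIV::real set)" "\<lambda>_. lborel"]
  by simp

lemma Z_null: "{h \<in> space (Pi\<^sub>M {..N::nat} (\<lambda>_. lborel)). \<exists>j\<in>{..N}. h j = (0::real)}
    \<in> null_sets (Pi\<^sub>M {..N} (\<lambda>_. lborel))"
proof -
  interpret product_sigma_finite "\<lambda>_::nat. lborel :: real measure"
    by (simp add: product_sigma_finite_def sigma_finite_lborel)
  define E where "E j = Pi\<^sub>E {..N} (\<lambda>i. if i = j then {0} else (UNIV :: real set))" for j
  have eq: "{h \<in> space (Pi\<^sub>M {..N} (\<lambda>_. lborel)). \<exists>j\<in>{..N}. h j = (0::real)} = (\<Union>j\<in>{..N}. E j)"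
    unfolding E_def space_PiM
    apply (auto simp: PiE_iff)
    subgoal for x j by (rule bexI[of _ j]) (auto dest: bspec[of _ _ j])
    done
  have "E j \<in> null_sets (Pi\<^sub>M {..N} (\<lambda>_. lborel))" if j: "j \<in> {..N}" for j
  proof (rule null_setsI)
    show "E j \<in> sets (Pi\<^sub>M {..N} (\<lambda>_. lborel))"
      unfolding E_def by (rule E_sets)
    have "emeasure (Pi\<^sub>M {..N} (\<lambda>_. lborel)) (E j)
        = (\<Prod>i\<in>{..N}. emeasure lborel (if i = j then {0} else (UNIV :: real set)))"
      unfolding E_def by (rule emeasure_PiM) auto
    also have "\<dots> = 0"
      using j by (intro prod_zero bexI[of _ j]) auto
    finally show "emeasure (Pi\<^sub>M {..N} (\<lambda>_. lborel)) (E j) = 0" .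
  qed
  then show ?thesis unfolding eq by (intro null_sets_UN') auto
qed

theorem theorem1:
  fixes N :: nat
  assumes "N \<ge> 1"
  shows "\<exists>Z \<in> null_sets (Pi\<^sub>M {..N} (\<lambda>_. lborel)).
    \<forall>h h'. h \<in> space (Pi\<^sub>M {..N} (\<lambda>_. lborel)) \<longrightarrow>
           h' \<in> space (Pi\<^sub>M {..N} (\<lambda>_. lborel)) \<longrightarrow>
           h \<notin> Z \<longrightarrow> h' \<notin> Z \<longrightarrow>
           h 0 = h' 0 \<longrightarrow> h 1 = h' 1 \<longrightarrow>
           (\<forall>s::complex. invertible_mat (resolvent_arg N h s) \<longrightarrow>
                invertible_mat (resolvent_arg N h' s) \<longrightarrow>
                transfer_fn N h s = transfer_fn N h' s) \<longrightarrow>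
           (\<forall>i\<in>{2..N}. \<bar>h i\<bar> = \<bar>h' i\<bar>)"
proof (rule bexI[OF _ Z_null[of N]], intro allI impI ballI)
  fix h h' :: "nat \<Rightarrow> real" and i
  let ?Z = "{h \<in> space (Pi\<^sub>M {..N} (\<lambda>_. lborel)). \<exists>j\<in>{..N}. h j = (0::real)}"
  assume hs: "h \<in> space (Pi\<^sub>M {..N} (\<lambda>_. lborel))" and hs': "h' \<in> space (Pi\<^sub>M {..N} (\<lambda>_. lborel))"
    and hZ: "h \<notin> ?Z" and hZ': "h' \<notin> ?Z" and h0: "h 0 = h' 0" and h1: "h 1 = h' 1"
    and G: "\<forall>s::complex. invertible_mat (resolvent_arg N h s) \<longrightarrow>
                invertible_mat (resolvent_arg N h' s) \<longrightarrow>
                transfer_fn N h s = transfer_fn N h' s"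
    and i: "i \<in> {2..N}"
  have nz: "h j \<noteq> 0" if "j \<le> N" for j using hs hZ that by auto
  have P0: "poly (Dp N h' 0 * Dp N h 2 - Dp N h 0 * Dp N h' 2) r = 0" if r: "r > 0" for r
  proof -
    let ?s = "complex_of_real r"
    have Geq: "transfer_fn N h ?s = transfer_fn N h' ?s"
      using G res_inv[OF r, of N h] res_inv[OF r, of N h'] by blast
    have t1: "complex_of_real (poly (Dp N h 0) r) * transfer_fn N h ?s = complex_of_real (- h 0 * poly (Dp N h 2) r)"
      by (rule transfer_eq[OF r])
    have t2: "complex_of_real (poly (Dp N h' 0) r) * transfer_fn N h ?s = complex_of_real (- h 0 * poly (Dp N h' 2) r)"
      using transfer_eq[OF r, of N h'] Geq h0 by simp
    have "complex_of_real (poly (Dp N h' 0) r) * complex_of_real (- h 0 * poly (Dp N h 2) r)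
        = complex_of_real (poly (Dp N h 0) r) * complex_of_real (- h 0 * poly (Dp N h' 2) r)"
      unfolding t1[symmetric] t2[symmetric] by (simp add: algebra_simps)
    then have "poly (Dp N h' 0) r * (- h 0 * poly (Dp N h 2) r) = poly (Dp N h 0) r * (- h 0 * poly (Dp N h' 2) r)"
      by (simp only: of_real_mult[symmetric] of_real_eq_iff)
    then have "h 0 * (poly (Dp N h' 0) r * poly (Dp N h 2) r - poly (Dp N h 0) r * poly (Dp N h' 2) r) = 0"
      by (simp add: algebra_simps)
    then show ?thesis using nz[of 0] by simp
  qed
  have Q0: "Dp N h' 0 * Dp N h 2 = Dp N h 0 * Dp N h' 2"
    using poly_zero_pos[OF P0] by simp
  have I1: "Dp N h 1 * Dp N h' (1+1) = Dp N h' 1 * Dp N h (1+1)"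
  proof -
    let ?X = "[:0,1:] :: real poly"
    have r1: "Dp N h 0 = ?X * Dp N h 1 + Polynomial.smult ((h 0)^2) (Dp N h 2)"
      using Dp_rec[of 0 N h] by (simp add: numeral_2_eq_2)
    have r2: "Dp N h' 0 = ?X * Dp N h' 1 + Polynomial.smult ((h 0)^2) (Dp N h' 2)"
      using Dp_rec[of 0 N h'] h0 by (simp add: numeral_2_eq_2)
    have "?X * (Dp N h' 1 * Dp N h 2) = ?X * (Dp N h 1 * Dp N h' 2)"
      using Q0 unfolding r1 r2 by (simp add: algebra_simps)
    then have "Dp N h' 1 * Dp N h 2 = Dp N h 1 * Dp N h' 2" by simp
    then show ?thesis by (simp add: numeral_2_eq_2 mult.commute)
  qed
  have Ik: "1 \<le> k \<longrightarrow> k \<le> N \<longrightarrow> Dp N h k * Dp N h' (k+1) = Dp N h' k * Dp N h (k+1)" for k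
  proof (induction k)
    case 0 then show ?case by simp
  next
    case (Suc k)
    show ?case
    proof (cases "k = 0")
      case True then show ?thesis using I1 by simp
    next
      case False
      show ?thesis
      proof (intro impI)
        assume "Suc k \<le> N"
        then have k: "1 \<le> k" "k \<le> N" using False by auto
        have "Dp N h k * Dp N h' (k+1) = Dp N h' k * Dp N h (k+1)" using Suc.IH k by blast
        from step_lemma[OF k(2) this] nz[OF k(2)]
        show "Dp N h (Suc k) * Dp N h' (Suc k + 1) = Dp N h' (Suc k) * Dp N h (Suc k + 1)"
          by simp
      qed
    qed
  qed
  have iN: "1 \<le> i" "i \<le> N" using i by auto
  have "(h i)^2 = (h' i)^2" using step_lemma[OF iN(2) Ik[rule_format, OF iN]] by blast
  then have "sqrt ((h i)^2) = sqrt ((h' i)^2)" by simp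
  then show "\<bar>h i\<bar> = \<bar>h' i\<bar>" by simp
qed

end
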